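(* Assume that $r(\omega)\neq r(\omega')$ for all distinct $\omega,\omega'\in\Omega^-$. Then for each $p\in J$ the greedy splitting $p=a_Iq_I+a_Jq_J$ is uniquely defined (as an element of $\mathcal{S}(p)$). In addition, $q_I\in\mathcal{F}$ (whenever $a_I>0$) and $q_J\in\Delta(\Omega^-)$.
   Context: $\Omega$ is a finite set, $r:\Omega\to\mathbb{R}$; each $\omega$ is identified with a unit vector of $\mathbb{R}^\Omega$ and $\Delta(\Omega)$ with the unit simplex. $I=\{p:\sum_\omega p(\omega)r(\omega)\ge0\}$, $J=\Delta(\Omega)\setminus I$, $\mathcal{F}=\{p:\sum_\omega p(\omega)r(\omega)=0\}$, $\Omega^-=\{\omega:r(\omega)<0\}$, and $\Delta(\Omega^-)$ is the face of the simplex spanned by $\Omega^-$. $\mathcal{S}(p)$ is the set of probability measures on $\Delta(\Omega)$ with mean $p$; a decomposition $p=a_Iq_I+a_Jq_J$ is identified with the measure putting weight $a_I$ on $q_I$ and $a_J$ on $q_J$. The greedy splitting at $p\in J$ is a decomposition $p=a_Iq_I+a_Jq_J$ maximizing $a_I$ subject to $q_I\in I$, $q_J\in\Delta(\Omega)$, $a_I+a_J=1$, $a_I,a_J\ge0$. *)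

theory Defs
  imports Main "HOL-Analysis.Analysis"
begin

text \<open>Omega is a finite type 'w; points of R^Omega are functions 'w => real.\<close>

definition prob_simplex :: "('w::finite \<Rightarrow> real) set" where
  "prob_simplex = {p. (\<forall>w. 0 \<le> p w) \<and> (\<Sum>w\<in>UNIV. p w) = 1}"

definition Iset :: "('w::finite \<Rightarrow> real) \<Rightarrow> ('w \<Rightarrow> real) set" where
  "Iset r = {p \<in> prob_simplex. (\<Sum>w\<in>UNIV. p w * r w) \<ge> 0}"

definition Jset :: "('w::finite \<Rightarrow> real) \<Rightarrow> ('w \<Rightarrow> real) set" where
  "Jset r = prob_simplex - Iset r"

definition Fset :: "('w::finite \<Rightarrow> real) \<Rightarrow> ('w \<Rightarrow> real) set" where
  "Fset r = {p. (\<Sum>w\<in>UNIV. p w * r w) = 0}"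

definition Omega_neg :: "('w::finite \<Rightarrow> real) \<Rightarrow> 'w set" where
  "Omega_neg r = {w. r w < 0}"

definition prob_simplex_neg :: "('w::finite \<Rightarrow> real) \<Rightarrow> ('w \<Rightarrow> real) set" where
  "prob_simplex_neg r = {p \<in> prob_simplex. \<forall>w. w \<notin> Omega_neg r \<longrightarrow> p w = 0}"

text \<open>Admissible decompositions p = aI qI + aJ qJ. The constraint qI in I is
  only imposed when aI > 0 (when aI = 0 the component qI carries no mass).\<close>
definition feasible_split ::
  "('w::finite \<Rightarrow> real) \<Rightarrow> ('w \<Rightarrow> real) \<Rightarrow> real \<Rightarrow> ('w \<Rightarrow> real) \<Rightarrow> real \<Rightarrow> ('w \<Rightarrow> real) \<Rightarrow> bool" where
  "feasible_split r p aI qI aJ qJ \<longleftrightarrow>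
     0 \<le> aI \<and> 0 \<le> aJ \<and> aI + aJ = 1 \<and> qI \<in> prob_simplex \<and> qJ \<in> prob_simplex \<and>
     (0 < aI \<longrightarrow> qI \<in> Iset r) \<and> p = (\<lambda>w. aI * qI w + aJ * qJ w)"

definition greedy_split ::
  "('w::finite \<Rightarrow> real) \<Rightarrow> ('w \<Rightarrow> real) \<Rightarrow> real \<Rightarrow> ('w \<Rightarrow> real) \<Rightarrow> real \<Rightarrow> ('w \<Rightarrow> real) \<Rightarrow> bool" where
  "greedy_split r p aI qI aJ qJ \<longleftrightarrow> feasible_split r p aI qI aJ qJ \<and>
     (\<forall>aI' qI' aJ' qJ'. feasible_split r p aI' qI' aJ' qJ' \<longrightarrow> aI' \<le> aI)"

text \<open>The (finitely supported) probability measure on the prob_simplex associated with a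
  decomposition: weight aI at qI and weight aJ at qJ (weights add if qI = qJ).\<close>
definition split_measure ::
  "real \<Rightarrow> ('w \<Rightarrow> real) \<Rightarrow> real \<Rightarrow> ('w \<Rightarrow> real) \<Rightarrow> (('w \<Rightarrow> real) \<Rightarrow> real)" where
  "split_measure aI qI aJ qJ = (\<lambda>q. (if q = qI then aI else 0) + (if q = qJ then aJ else 0))"

end

theory Submission
  imports Defs
begin

lemma ex_max_on:
  fixes f :: "'a \<Rightarrow> real"
  assumes "finite S" "S \<noteq> {}"
  shows "\<exists>x\<in>S. \<forall>y\<in>S. f y \<le> f x"
proof -
  have "Max (f ` S) \<in> f ` S" using assms by auto
  then obtain x where "x \<in> S" "f x = Max (f ` S)" by auto
  then show ?thesis using assms by (metis Max_ge finite_imageI imageI)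
qed

lemma ex_min_on:
  fixes f :: "'a \<Rightarrow> real"
  assumes "finite S" "S \<noteq> {}"
  shows "\<exists>x\<in>S. \<forall>y\<in>S. f x \<le> f y"
  using ex_max_on[OF assms, of "\<lambda>x. - f x"] by auto

lemma feas_x:
  fixes r :: "'w::finite \<Rightarrow> real"
  assumes "feasible_split r p a qI b qJ"
  shows "(\<forall>w. 0 \<le> a * qI w \<and> a * qI w \<le> p w) \<and> (\<Sum>w\<in>UNIV. (a * qI w) * r w) \<ge> 0
     \<and> (\<Sum>w\<in>UNIV. a * qI w) = a"
proof -
  have a: "0 \<le> a" "0 \<le> b" "qI \<in> prob_simplex" "qJ \<in> prob_simplex"
    "0 < a \<longrightarrow> qI \<in> Iset r" "p = (\<lambda>w. a * qI w + b * qJ w)"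
    using assms by (auto simp: feasible_split_def)
  have 1: "\<forall>w. 0 \<le> a * qI w \<and> a * qI w \<le> p w"
    using a by (auto simp: prob_simplex_def)
  have 2: "(\<Sum>w\<in>UNIV. (a * qI w) * r w) = a * (\<Sum>w\<in>UNIV. qI w * r w)"
    by (simp add: sum_distrib_left mult.assoc)
  have 3: "(\<Sum>w\<in>UNIV. (a * qI w) * r w) \<ge> 0"
  proof (cases "a = 0")
    case True then show ?thesis by simp
  next
    case False
    then have "qI \<in> Iset r" using a by auto
    then show ?thesis using 2 a by (simp add: Iset_def)
  qed
  have 4: "(\<Sum>w\<in>UNIV. a * qI w) = a"
    using a by (simp add: sum_distrib_left[symmetric] prob_simplex_def)
  show ?thesis using 1 3 4 by blast
qed

theorem lemma3:
  fixes r :: "'w::finite \<Rightarrow> real" and p :: "'w \<Rightarrow> real"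
  assumes distinct: "\<forall>w w'. w \<in> Omega_neg r \<longrightarrow> w' \<in> Omega_neg r \<longrightarrow> w \<noteq> w' \<longrightarrow> r w \<noteq> r w'"
    and pJ: "p \<in> Jset r"
  shows "(\<exists>aI qI aJ qJ. greedy_split r p aI qI aJ qJ)
    \<and> (\<forall>aI qI aJ qJ aI' qI' aJ' qJ'.
          greedy_split r p aI qI aJ qJ \<longrightarrow> greedy_split r p aI' qI' aJ' qJ' \<longrightarrow>
          split_measure aI qI aJ qJ = split_measure aI' qI' aJ' qJ')
    \<and> (\<forall>aI qI aJ qJ. greedy_split r p aI qI aJ qJ \<longrightarrow>
          (0 < aI \<longrightarrow> qI \<in> Fset r) \<and> qJ \<in> prob_simplex_neg r)"
proof -
  have pS: "p \<in> prob_simplex" and pneg: "(\<Sum>w\<in>UNIV. p w * r w) < 0"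
    using pJ by (auto simp: Jset_def Iset_def)
  have p0: "\<And>w. 0 \<le> p w" and p1: "(\<Sum>w\<in>UNIV. p w) = 1"
    using pS by (auto simp: prob_simplex_def)
  have dist: "\<And>w w'. r w < 0 \<Longrightarrow> r w' = r w \<Longrightarrow> w' = w"
    using distinct unfolding Omega_neg_def by (metis mem_Collect_eq)
  define G where "G = (\<lambda>w0. \<Sum>w\<in>{w. r w > r w0}. p w * r w)"
  define T where "T = {w0. r w0 < 0 \<and> G w0 \<ge> 0}"
  have Nne: "{w. r w < 0} \<noteq> {}"
  proof
    assume "{w. r w < 0} = {}"
    then have "\<And>w. 0 \<le> p w * r w" using p0 by (auto intro: mult_nonneg_nonneg simp: not_less)
    then have "0 \<le> (\<Sum>w\<in>UNIV. p w * r w)" by (simp add: sum_nonneg)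
    with pneg show False by simp
  qed
  obtain wm where wm: "r wm < 0" "\<And>w. r w < 0 \<Longrightarrow> r w \<le> r wm"
    using ex_max_on[of "{w. r w < 0}" r] Nne by auto
  have "wm \<in> T"
  proof -
    have "\<And>w. w \<in> {w. r w > r wm} \<Longrightarrow> 0 \<le> p w * r w"
    proof -
      fix w assume "w \<in> {w. r w > r wm}"
      then have "r w \<ge> 0" using wm(2)[of w] by force
      then show "0 \<le> p w * r w" using p0[of w] by simp
    qed
    then have "G wm \<ge> 0" unfolding G_def by (rule sum_nonneg)
    then show ?thesis using wm T_def by auto
  qed
  then have "T \<noteq> {}" by auto
  then obtain w0 where w0T: "w0 \<in> T" and w0min: "\<And>w. w \<in> T \<Longrightarrow> r w0 \<le> r w"
    using ex_min_on[of T r] by auto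
  have rw0: "r w0 < 0" and Gw0: "G w0 \<ge> 0" using w0T T_def by auto
  have sumins: "(\<Sum>w\<in>insert w0 {w. r w > r w0}. p w * r w) = p w0 * r w0 + G w0"
    unfolding G_def by (subst sum.insert) auto
  have H: "G w0 + p w0 * r w0 < 0"
  proof (rule ccontr)
    assume Hn: "\<not> G w0 + p w0 * r w0 < 0"
    show False
    proof (cases "{w. r w < r w0} = {}")
      case True
      then have "insert w0 {w. r w > r w0} = UNIV"
        using dist[OF rw0] by (auto simp: not_less) (metis order_less_le)
      then show False using sumins Hn pneg by simp
    next
      case False
      then obtain w1 where w1: "r w1 < r w0" "\<And>w. r w < r w0 \<Longrightarrow> r w \<le> r w1"
        using ex_max_on[of "{w. r w < r w0}" r] by auto
      have "{w. r w > r w1} = insert w0 {w. r w > r w0}"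
      proof (rule set_eqI, rule iffI)
        fix w assume "w \<in> {w. r w > r w1}"
        then have "r w > r w1" by simp
        then have "\<not> r w < r w0" using w1(2)[of w] by auto
        then show "w \<in> insert w0 {w. r w > r w0}" using dist[OF rw0, of w] by auto
      qed (use w1 in auto)
      then have "G w1 \<ge> 0" using sumins Hn unfolding G_def by simp
      then have "w1 \<in> T" using w1 rw0 T_def by auto
      then show False using w0min w1 by force
    qed
  qed
  define c where "c = - (p w0 * r w0)"
  have cpos: "c > G w0" using H c_def by simp
  define \<theta> where "\<theta> = G w0 / c"
  have th0: "0 \<le> \<theta>" and th1: "\<theta> < 1" using cpos Gw0 by (auto simp: \<theta>_def divide_simps)
  define x where "x = (\<lambda>w. if r w > r w0 then p w else if w = w0 then \<theta> * p w0 else 0)"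
  have x0: "\<And>w. 0 \<le> x w" and xp: "\<And>w. x w \<le> p w"
    using p0 th0 th1 by (auto simp: x_def mult_le_cancel_right1 mult_left_le_one_le)
  have xr_pt: "\<And>w. x w * r w = (if w \<in> {w. r w > r w0} then p w * r w else 0)
      + (if w0 = w then \<theta> * p w0 * r w0 else 0)"
    by (auto simp: x_def)
  have xr: "(\<Sum>w\<in>UNIV. x w * r w) = 0"
  proof -
    have "(\<Sum>w\<in>UNIV. x w * r w) = G w0 + \<theta> * p w0 * r w0"
      unfolding xr_pt sum.distrib G_def by (simp add: sum.If_cases)
    also have "\<dots> = G w0 - \<theta> * c" by (simp add: c_def)
    also have "\<dots> = 0" using cpos Gw0 by (simp add: \<theta>_def)
    finally show ?thesis .
  qed
  define A where "A = (\<Sum>w\<in>UNIV. x w)"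
  have key: "\<And>y. (\<forall>w. 0 \<le> y w \<and> y w \<le> p w) \<Longrightarrow> (\<Sum>w\<in>UNIV. y w * r w) \<ge> 0 \<Longrightarrow>
      (\<Sum>w\<in>UNIV. y w) \<le> A \<and> ((\<Sum>w\<in>UNIV. y w) = A \<longrightarrow> y = x)"
  proof -
    fix y assume yb: "\<forall>w. 0 \<le> y w \<and> y w \<le> p w" and yr: "(\<Sum>w\<in>UNIV. y w * r w) \<ge> 0"
    have pt: "\<And>w. y w * (r w - r w0) \<le> x w * (r w - r w0)"
    proof -
      fix w
      consider "r w > r w0" | "w = w0" | "r w < r w0"
        using dist[OF rw0, of w] by fastforce
      then show "y w * (r w - r w0) \<le> x w * (r w - r w0)"
      proof cases
        case 1 then show ?thesis using yb by (simp add: x_def mult_right_mono)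
      next
        case 2 then show ?thesis by simp
      next
        case 3 then have "x w = 0" using dist[OF rw0, of w] by (auto simp: x_def)
        then show ?thesis using 3 yb by (simp add: mult_nonneg_nonpos)
      qed
    qed
    have ey: "(\<Sum>w\<in>UNIV. y w * (r w - r w0)) = (\<Sum>w\<in>UNIV. y w * r w) - r w0 * (\<Sum>w\<in>UNIV. y w)"
      by (simp add: algebra_simps sum_subtractf sum_distrib_left)
    have ex: "(\<Sum>w\<in>UNIV. x w * (r w - r w0)) = - r w0 * A"
      using xr by (simp add: A_def algebra_simps sum_subtractf sum_distrib_left sum_negf)
    have le: "(\<Sum>w\<in>UNIV. y w * (r w - r w0)) \<le> (\<Sum>w\<in>UNIV. x w * (r w - r w0))"
      using pt by (rule sum_mono)
    have "- r w0 * (\<Sum>w\<in>UNIV. y w) \<le> - r w0 * A" using ey ex le yr by linarith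
    then have s1: "(\<Sum>w\<in>UNIV. y w) \<le> A" using rw0 by simp
    have s2: "y = x" if eq: "(\<Sum>w\<in>UNIV. y w) = A"
    proof -
      have "(\<Sum>w\<in>UNIV. y w * (r w - r w0)) = (\<Sum>w\<in>UNIV. x w * (r w - r w0))"
        using ey ex le yr eq by (simp add: algebra_simps)
      then have e: "\<And>w. y w * (r w - r w0) = x w * (r w - r w0)"
        using sum_mono_inv[of "\<lambda>w. y w * (r w - r w0)" UNIV "\<lambda>w. x w * (r w - r w0)", OF _ pt] by simp
      have off: "\<And>w. w \<noteq> w0 \<Longrightarrow> y w = x w"
      proof -
        fix w assume "w \<noteq> w0"
        then have "r w - r w0 \<noteq> 0" using dist[OF rw0, of w] by auto
        then show "y w = x w" using e[of w] by simp
      qed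
      have "(\<Sum>w\<in>UNIV. y w) = y w0 + (\<Sum>w\<in>UNIV - {w0}. y w)"
        by (simp add: sum.remove)
      moreover have "(\<Sum>w\<in>UNIV. x w) = x w0 + (\<Sum>w\<in>UNIV - {w0}. x w)"
        by (simp add: sum.remove)
      moreover have "(\<Sum>w\<in>UNIV - {w0}. y w) = (\<Sum>w\<in>UNIV - {w0}. x w)"
        using off by (intro sum.cong) auto
      ultimately have "y w0 = x w0" using eq A_def by simp
      then show "y = x" using off by (metis ext)
    qed
    show "(\<Sum>w\<in>UNIV. y w) \<le> A \<and> ((\<Sum>w\<in>UNIV. y w) = A \<longrightarrow> y = x)" using s1 s2 by blast
  qed
  have A0: "0 \<le> A" unfolding A_def using x0 by (simp add: sum_nonneg)
  have A1: "A < 1"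
  proof -
    have "A \<le> 1" unfolding A_def p1[symmetric] using xp by (rule sum_mono)
    moreover have "A \<noteq> 1"
    proof
      assume "A = 1"
      then have "(\<Sum>w\<in>UNIV. x w) = (\<Sum>w\<in>UNIV. p w)" using A_def p1 by simp
      then have "\<And>w. x w = p w" using sum_mono_inv[of x UNIV p, OF _ xp] by simp
      then show False using xr pneg by simp
    qed
    ultimately show ?thesis by simp
  qed
  have xA0: "\<And>w. A = 0 \<Longrightarrow> x w = 0"
    using sum_nonneg_eq_0_iff[of UNIV x] x0 A_def by auto
  define qI where "qI = (if A > 0 then (\<lambda>w. x w / A) else p)"
  define qJ where "qJ = (\<lambda>w. (p w - x w) / (1 - A))"
  have feas: "feasible_split r p A qI (1 - A) qJ"
  proof -
    have qIS: "qI \<in> prob_simplex"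
    proof (cases "A > 0")
      case True
      then show ?thesis using x0 A_def
        by (auto simp: qI_def prob_simplex_def sum_divide_distrib[symmetric])
    qed (use pS qI_def in auto)
    have qJS: "qJ \<in> prob_simplex"
      using xp A1 p1 A_def
      by (auto simp: qJ_def prob_simplex_def sum_divide_distrib[symmetric] sum_subtractf)
    have qII: "0 < A \<longrightarrow> qI \<in> Iset r"
    proof
      assume "0 < A"
      then have "(\<Sum>w\<in>UNIV. qI w * r w) = (\<Sum>w\<in>UNIV. x w * r w) / A"
        by (simp add: qI_def sum_divide_distrib)
      then show "qI \<in> Iset r" using qIS xr by (simp add: Iset_def)
    qed
    have peq: "p = (\<lambda>w. A * qI w + (1 - A) * qJ w)"
    proof
      fix w show "p w = A * qI w + (1 - A) * qJ w"
        using A1 A0 xA0[of w] by (cases "A > 0") (auto simp: qI_def qJ_def)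
    qed
    show ?thesis using A0 A1 qIS qJS qII peq by (simp add: feasible_split_def)
  qed
  have greedy: "greedy_split r p A qI (1 - A) qJ"
    unfolding greedy_split_def
  proof (intro conjI allI impI feas)
    fix a' qI' aJ' qJ' assume "feasible_split r p a' qI' aJ' qJ'"
    from feas_x[OF this] key[of "\<lambda>w. a' * qI' w"] show "a' \<le> A" by auto
  qed
  have char: "a = A \<and> (\<lambda>w. a * qI' w) = x \<and> aJ = 1 - A \<and> qJ' = qJ"
    if g: "greedy_split r p a qI' aJ qJ'" for a qI' aJ qJ'
  proof -
    have f: "feasible_split r p a qI' aJ qJ'" using g by (simp add: greedy_split_def)
    have "A \<le> a" using g feas unfolding greedy_split_def by blast
    moreover from feas_x[OF f] key[of "\<lambda>w. a * qI' w"]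
    have "a \<le> A" and k: "a = A \<longrightarrow> (\<lambda>w. a * qI' w) = x" by auto
    ultimately have aA: "a = A" by simp
    with k have ax: "(\<lambda>w. a * qI' w) = x" by simp
    have aJ: "aJ = 1 - A" using f aA by (simp add: feasible_split_def)
    have "\<And>w. p w = x w + aJ * qJ' w"
      using f ax by (auto simp: feasible_split_def dest: fun_cong)
    then have "\<And>w. qJ' w = qJ w" using A1 aJ by (simp add: qJ_def field_simps)
    then show ?thesis using aA ax aJ by auto
  qed
  have qIchar: "0 < a \<Longrightarrow> greedy_split r p a qI' aJ qJ' \<Longrightarrow> qI' = (\<lambda>w. x w / A)" for a qI' aJ qJ'
  proof -
    assume a: "0 < a" "greedy_split r p a qI' aJ qJ'"
    from char[OF a(2)] have "a = A" "(\<lambda>w. a * qI' w) = x" by auto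
    then show ?thesis using a(1) by (auto simp: field_simps dest: fun_cong)
  qed
  have P2: "split_measure a qI' aJ qJ' = split_measure A qI (1 - A) qJ"
    if g: "greedy_split r p a qI' aJ qJ'" for a qI' aJ qJ'
  proof (cases "A > 0")
    case True
    then have "qI' = qI" using qIchar[OF _ g] char[OF g] by (simp add: qI_def)
    then show ?thesis using char[OF g] by simp
  next
    case False
    then have "A = 0" using A0 by simp
    then show ?thesis using char[OF g] by (simp add: split_measure_def)
  qed
  have P3: "(0 < a \<longrightarrow> qI' \<in> Fset r) \<and> qJ' \<in> prob_simplex_neg r"
    if g: "greedy_split r p a qI' aJ qJ'" for a qI' aJ qJ'
  proof
    show "0 < a \<longrightarrow> qI' \<in> Fset r"
    proof
      assume a: "0 < a"
      then have "qI' = (\<lambda>w. x w / A)" using qIchar g by blast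
      then show "qI' \<in> Fset r" using xr by (simp add: Fset_def sum_divide_distrib[symmetric])
    qed
    have qJ'S: "qJ' \<in> prob_simplex" using g by (simp add: greedy_split_def feasible_split_def)
    have "\<And>w. w \<notin> Omega_neg r \<Longrightarrow> qJ w = 0"
    proof -
      fix w assume "w \<notin> Omega_neg r"
      then have "r w > r w0" using rw0 by (simp add: Omega_neg_def)
      then show "qJ w = 0" by (simp add: qJ_def x_def)
    qed
    then show "qJ' \<in> prob_simplex_neg r" using char[OF g] qJ'S by (simp add: prob_simplex_neg_def)
  qed
  show ?thesis using greedy P2 P3 by metis
qed

end
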